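(* There is an absolute constant $c>0$ such that for every sufficiently large positive integer $n$ the following holds. Let $f=f_n:\mathbb{R}\to\mathbb{R}$ be the continuous function which equals $1$ on $[\frac{1}{n},1-\frac{1}{n}]$, equals $-1$ on $[-1+\frac{1}{n},-\frac{1}{n}]$, equals $0$ for $|t|\geq 1$, and is linear on each of the intervals $[-1,-1+\frac{1}{n}]$, $[-\frac{1}{n},\frac{1}{n}]$ and $[1-\frac{1}{n},1]$. Then $$\bigg|\,\mathrm{p.v.}\int_{\mathbb{R}} e^{if(t)}\frac{dt}{t}\bigg| \geq c \log n.$$
   Context: The principal value integral is $\mathrm{p.v.}\int_{\mathbb{R}} e^{if(t)}\frac{dt}{t}=\lim_{\epsilon\to 0^+,\,R\to\infty}\int_{\epsilon\leq |t|\leq R} e^{if(t)}\frac{dt}{t}$. *)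

theory Defs
  imports "HOL-Analysis.Analysis"
begin

definition fn :: "nat \<Rightarrow> real \<Rightarrow> real" where
  "fn n t = (if \<bar>t\<bar> \<ge> 1 then 0
             else if \<bar>t\<bar> \<le> 1 / real n then real n * t
             else if \<bar>t\<bar> \<ge> 1 - 1 / real n then sgn t * (real n * (1 - \<bar>t\<bar>))
             else sgn t)"

definition trunc_int :: "(real \<Rightarrow> real) \<Rightarrow> real \<Rightarrow> real \<Rightarrow> complex" where
  "trunc_int f eps R = integral {t. eps \<le> \<bar>t\<bar> \<and> \<bar>t\<bar> \<le> R} (\<lambda>t. exp (\<i> * of_real (f t)) / of_real t)"

definition pv_has_value :: "(real \<Rightarrow> real) \<Rightarrow> complex \<Rightarrow> bool" where
  "pv_has_value f L \<longleftrightarrow> ((\<lambda>(eps, R). trunc_int f eps R) \<longlongrightarrow> L) (at_right 0 \<times>\<^sub>F at_top)"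

end

theory Submission
  imports Defs
begin

lemma fn_odd: "fn n (-t) = - fn n t"
  unfolding fn_def by (auto simp: sgn_minus)

lemma fn_pos:
  assumes n: "n \<ge> 2" and t: "t \<ge> 0"
  shows "fn n t = max 0 (min 1 (min (real n*t) (real n*(1-t))))"
proof -
  have n2: "real n \<ge> 2" using n by simp
  have nn: "real n * (1/real n) = 1" using n2 by simp
  show ?thesis
  proof (cases "t \<ge> 1")
    case True
    have "real n*(1-t) \<le> 0" using True n2 by (simp add: mult_nonneg_nonpos)
    then show ?thesis unfolding fn_def using t True by simp
  next
    case F1: False
    show ?thesis
    proof (cases "t \<le> 1/real n")
      case True
      have "real n * t \<le> 1" using True n2 by (simp add: field_simps)
      moreover have "real n*t \<le> real n*(1-t)"
      proof -
        have "real n*(1-t) = real n - real n*t" by (simp add: algebra_simps)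
        thus ?thesis using \<open>real n * t \<le> 1\<close> n2 by linarith
      qed
      ultimately show ?thesis unfolding fn_def using t F1 True by simp
    next
      case F2: False
      have a: "real n * t > 1" using F2 n2 by (simp add: field_simps)
      have tp: "sgn t = 1" using a t by (cases "t = 0") (auto simp: sgn_if)
      show ?thesis
      proof (cases "t \<ge> 1 - 1/real n")
        case True
        have "real n * (1-t) \<le> 1" using True n2 by (simp add: field_simps)
        moreover have "real n * (1-t) \<ge> 0" using F1 n2 by simp
        ultimately show ?thesis unfolding fn_def using t F1 F2 True a tp by auto
      next
        case False
        have "real n * (1-t) > 1" using False n2 by (simp add: field_simps)
        then show ?thesis unfolding fn_def using t F1 F2 False a tp by auto
      qed
    qed
  qed
qed

lemma fn_cont: "n \<ge> 2 \<Longrightarrow> continuous_on {0..} (fn n)"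
  by (rule continuous_on_cong[THEN iffD2, OF refl, of _ _ "\<lambda>t. max 0 (min 1 (min (real n*t) (real n*(1-t))))"])
     (auto simp: fn_pos intro!: continuous_intros)


definition hh :: "nat \<Rightarrow> real \<Rightarrow> real" where "hh n t = sin (fn n t) / t"

lemma hh_cont: "n \<ge> 2 \<Longrightarrow> 0 < a \<Longrightarrow> continuous_on {a..b} (hh n)"
  unfolding hh_def
  by (intro continuous_intros continuous_on_subset[OF fn_cont]) auto

lemma hh_bounds:
  assumes n: "n \<ge> 2" and t: "0 < t"
  shows "0 \<le> hh n t \<and> hh n t \<le> real n"
proof -
  have f: "fn n t = max 0 (min 1 (min (real n*t) (real n*(1-t))))" using fn_pos[OF n] t by simp
  have f0: "0 \<le> fn n t" and f1: "fn n t \<le> 1" and f2: "fn n t \<le> real n * t" using f t by auto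
  have "1 \<le> pi" using pi_gt3 by simp
  hence s0: "0 \<le> sin (fn n t)" using f0 f1 by (intro sin_ge_zero) auto
  have s1: "sin (fn n t) \<le> real n * t" using sin_x_le_x[OF f0] f2 by linarith
  have "sin (fn n t) / t \<le> real n * t / t" using s1 t by (intro divide_right_mono) auto
  thus ?thesis using s0 t unfolding hh_def by auto
qed

lemma hh_zero: "t \<ge> 1 \<Longrightarrow> hh n t = 0"
  unfolding hh_def fn_def by simp

lemma hh_one:
  assumes n: "n \<ge> 2" and t: "1/real n \<le> t" "t \<le> 1 - 1/real n"
  shows "hh n t = sin 1 / t"
proof -
  have n2: "real n \<ge> 2" using n by simp
  have tp: "t > 0" using t n2 by (smt (verit) divide_pos_pos)
  have "real n * t \<ge> 1" using t(1) n2 by (simp add: field_simps)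
  moreover have "real n * (1-t) \<ge> 1" using t(2) n2 by (simp add: field_simps)
  ultimately have "fn n t = 1" using fn_pos[OF n, of t] tp by simp
  thus ?thesis unfolding hh_def by simp
qed

lemma trunc_eq:
  assumes n: "n \<ge> 2" and e: "0 < eps" "eps < 1" and R: "1 \<le> R"
  shows "trunc_int (fn n) eps R = 2 * \<i> * of_real (integral {eps..1} (hh n))"
proof -
  define g where "g = (\<lambda>t. exp (\<i> * of_real (fn n t)) / (of_real t :: complex))"
  have cf: "continuous_on {eps..R} (fn n)" by (rule continuous_on_subset[OF fn_cont[OF n]]) (use e in auto)
  have cg1: "continuous_on {eps..R} g" unfolding g_def
    by (intro continuous_intros cf) (use e in auto)
  have cg2: "continuous_on {eps..R} (\<lambda>t. g (-t))" unfolding g_def fn_odd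
    by (intro continuous_intros cf) (use e in auto)
  have I1: "(g has_integral integral {eps..R} g) {eps..R}"
    using integrable_continuous_real[OF cg1] by (simp add: integrable_integral)
  have I2': "((\<lambda>t. g (-t)) has_integral integral {eps..R} (\<lambda>t. g (-t))) {eps..R}"
    using integrable_continuous_real[OF cg2] by (simp add: integrable_integral)
  have I2: "(g has_integral integral {eps..R} (\<lambda>t. g (-t))) {-R..-eps}"
    using has_integral_reflect_real[of "\<lambda>t. g (-t)" _ R eps] I2' by simp
  have S: "{t. eps \<le> \<bar>t\<bar> \<and> \<bar>t\<bar> \<le> R} = {-R..-eps} \<union> {eps..R}" using e by auto
  have U: "(g has_integral (integral {eps..R} (\<lambda>t. g (-t)) + integral {eps..R} g)) {t. eps \<le> \<bar>t\<bar> \<and> \<bar>t\<bar> \<le> R}"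
    unfolding S by (rule has_integral_Un[OF I2 I1]) (use e in auto)
  have T: "trunc_int (fn n) eps R = integral {eps..R} (\<lambda>t. g t + g (-t))"
    unfolding trunc_int_def g_def[symmetric] using integral_unique[OF U]
      integral_add[OF has_integral_integrable[OF I1] has_integral_integrable[OF I2']] by simp
  have pt: "g t + g (-t) = 2 * \<i> * of_real (hh n t)" if "t \<in> {eps..R}" for t
  proof -
    have "t \<noteq> 0" using that e by auto
    thus ?thesis unfolding g_def hh_def fn_odd
      by (simp add: sin_exp_eq field_simps flip: sin_of_real)
  qed
  have ih: "hh n integrable_on {eps..R}" by (rule integrable_continuous_real[OF hh_cont[OF n e(1)]])
  have "integral {eps..R} (\<lambda>t. g t + g (-t)) = integral {eps..R} (\<lambda>t. 2 * \<i> * of_real (hh n t))"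
    by (rule integral_cong) (use pt in auto)
  also have "\<dots> = 2 * \<i> * of_real (integral {eps..R} (hh n))"
    using has_integral_mult_right[OF has_integral_of_real[OF integrable_integral[OF ih]], of "2*\<i>"]
    by (rule integral_unique)
  also have "integral {eps..R} (hh n) = integral {eps..1} (hh n) + integral {1..R} (hh n)"
    using Henstock_Kurzweil_Integration.integral_combine[OF _ R ih] e by simp
  also have "integral {1..R} (hh n) = 0"
    by (rule integral_unique[OF has_integral_is_0]) (simp add: hh_zero)
  finally show ?thesis using T by simp
qed


lemma hh_int: "n \<ge> 2 \<Longrightarrow> 0 < a \<Longrightarrow> hh n integrable_on {a..b}"
  by (rule integrable_continuous_real[OF hh_cont])

lemma F_nonneg: "n \<ge> 2 \<Longrightarrow> 0 < a \<Longrightarrow> 0 \<le> integral {a..b} (hh n)"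
  by (rule integral_nonneg[OF hh_int]) (use hh_bounds in auto)

lemma F_mono:
  assumes n: "n \<ge> 2" and ab: "0 < a" "a \<le> b"
  shows "integral {b..1} (hh n) \<le> integral {a..1} (hh n)"
proof (cases "b \<le> 1")
  case True
  show ?thesis
    by (rule integral_subset_le) (use n ab hh_int hh_bounds in auto)
next
  case False
  then show ?thesis using F_nonneg[OF n ab(1)] by simp
qed

lemma F_bound:
  assumes n: "n \<ge> 2" and a: "0 < a"
  shows "integral {a..1} (hh n) \<le> real n"
proof (cases "a \<le> 1")
  case True
  have "integral {a..1} (hh n) \<le> integral {a..1} (\<lambda>_. real n)"
    by (rule integral_le) (use n a hh_int hh_bounds in auto)
  also have "\<dots> = real n * (1 - a)" using True by simp
  also have "\<dots> \<le> real n" using a by (simp add: mult_left_le)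
  finally show ?thesis .
next
  case False
  then show ?thesis by simp
qed

lemma F_lower:
  assumes n: "n \<ge> 3"
  shows "integral {1/real n..1} (hh n) \<ge> sin 1 * ln (real n - 1)"
proof -
  have n2: "n \<ge> 2" using n by simp
  have r3: "real n \<ge> 3" using n by simp
  define a where "a = 1/real n"
  define b where "b = 1 - 1/real n"
  have a0: "0 < a" unfolding a_def using r3 by simp
  have ab: "a \<le> b" unfolding a_def b_def using r3 by (simp add: field_simps)
  have b1: "b \<le> 1" unfolding b_def using r3 by simp
  have "integral {a..b} (hh n) \<le> integral {a..1} (hh n)"
    by (rule integral_subset_le) (use n2 a0 b1 hh_int hh_bounds in auto)
  moreover have "integral {a..b} (hh n) = integral {a..b} (\<lambda>t. sin 1 / t)"
    by (rule integral_cong) (use hh_one[OF n2] in \<open>auto simp: a_def b_def\<close>)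
  moreover have "((\<lambda>t. sin 1 / t) has_integral (sin 1 * ln b - sin 1 * ln a)) {a..b}"
  proof (rule fundamental_theorem_of_calculus[OF ab])
    fix x assume x: "x \<in> {a..b}"
    hence "x > 0" using a0 by auto
    thus "((\<lambda>t. sin 1 * ln t) has_vector_derivative sin 1 / x) (at x within {a..b})"
      by (auto intro!: derivative_eq_intros simp: has_real_derivative_iff_has_vector_derivative[symmetric])
  qed
  moreover have "ln b - ln a = ln (real n - 1)"
  proof -
    have "b / a = real n - 1" unfolding a_def b_def using r3 by (simp add: field_simps)
    moreover have "b > 0" using a0 ab by simp
    ultimately show ?thesis using a0 ln_div[of b a] by simp
  qed
  ultimately show ?thesis unfolding a_def
    by (metis integral_unique right_diff_distrib)
qed


lemma main_n:
  assumes n: "n \<ge> 3"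
  shows "\<exists>L. pv_has_value (fn n) L \<and> norm L \<ge> sin 1 * ln (real n)"
proof -
  have n2: "n \<ge> 2" using n by simp
  have r3: "real n \<ge> 3" using n by simp
  define F where "F = (\<lambda>e. integral {e..1} (hh n))"
  have lim0: "((\<lambda>e. - F e) \<longlongrightarrow> Inf ((\<lambda>e. - F e) ` ({0<..} \<inter> UNIV))) (at 0 within ({0<..} \<inter> UNIV))"
    by (rule Lim_right_bound[where K = "- real n"]) (use F_mono[OF n2] F_bound[OF n2] in \<open>auto simp: F_def\<close>)
  define M where "M = - Inf ((\<lambda>e. - F e) ` ({0<..} \<inter> UNIV))"
  have FM: "(F \<longlongrightarrow> M) (at_right 0)"
    using tendsto_minus[OF lim0] unfolding M_def by simp
  define L where "L = 2 * \<i> * complex_of_real M"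
  have pv: "pv_has_value (fn n) L"
    unfolding pv_has_value_def
  proof (rule Lim_transform_eventually)
    show "((\<lambda>x. 2 * \<i> * complex_of_real (F (fst x))) \<longlongrightarrow> L) (at_right 0 \<times>\<^sub>F at_top)"
      unfolding L_def
      by (intro tendsto_mult_left tendsto_of_real filterlim_compose[OF FM filterlim_fst])
    have "\<forall>\<^sub>F x in at_right (0::real) \<times>\<^sub>F (at_top::real filter). fst x \<in> {0<..<1} \<and> 1 \<le> snd x"
      using eventually_prodI[OF eventually_at_right_real[of 0 1] eventually_ge_at_top[of 1]] by simp
    thus "\<forall>\<^sub>F x in at_right 0 \<times>\<^sub>F at_top. 2 * \<i> * complex_of_real (F (fst x)) = (case x of (eps, R) \<Rightarrow> trunc_int (fn n) eps R)"
      by eventually_elim (auto simp: F_def trunc_eq[OF n2])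
  qed
  have "F (1/real n) \<le> M"
  proof (rule tendsto_le[OF _ FM tendsto_const])
    show "at_right (0::real) \<noteq> bot" by simp
    have "1/real n > 0" using r3 by simp
    hence "\<forall>\<^sub>F e in at_right 0. e \<in> {0<..<1/real n}" by (rule eventually_at_right_real)
    thus "\<forall>\<^sub>F e in at_right 0. F (1/real n) \<le> F e"
      by eventually_elim (auto simp: F_def intro!: F_mono[OF n2])
  qed
  hence M1: "M \<ge> sin 1 * ln (real n - 1)" using F_lower[OF n] unfolding F_def by simp
  have s1: "sin (1::real) > 0" using pi_gt3 by (intro sin_gt_zero) auto
  have l0: "ln (real n - 1) \<ge> 0" using r3 by simp
  have "ln (real n) \<le> ln ((real n - 1)^2)"
  proof (rule ln_mono)
    have e: "(real n - 1)^2 = real n * (real n - 3) + 1 + real n" by (simp add: power2_eq_square algebra_simps)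
    have "real n * (real n - 3) \<ge> 0" using r3 by simp
    thus "real n \<le> (real n - 1)^2" unfolding e by simp
  qed (use r3 in auto)
  also have "\<dots> = 2 * ln (real n - 1)" using r3 by (simp add: ln_realpow)
  finally have "sin 1 * ln (real n) \<le> sin 1 * (2 * ln (real n - 1))" using s1 by simp
  also have "\<dots> \<le> 2 * M" using M1 by simp
  also have "2 * M \<le> norm L" unfolding L_def by (simp add: norm_mult)
  finally show ?thesis using pv by blast
qed

theorem lemma1:
  shows "\<exists>c>0. \<forall>\<^sub>F n in sequentially.
           \<exists>L. pv_has_value (fn n) L \<and> norm L \<ge> c * ln (real n)"
proof (intro exI conjI)
  show "sin (1::real) > 0" using pi_gt3 by (intro sin_gt_zero) auto
  show "\<forall>\<^sub>F n in sequentially. \<exists>L. pv_has_value (fn n) L \<and> norm L \<ge> sin 1 * ln (real n)"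
    using eventually_ge_at_top[of 3] by eventually_elim (rule main_n)
qed

end
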